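(* For every $\varepsilon>0$ there exists $n_0$ such that for every $n\ge n_0$ and every permutation $\pi\in S_n$, the sum of the induced densities in $\pi$ of the eight permutations $1234, 1243, 2134, 2143, 3412, 4312, 3421, 4321$ is at least $\frac13-\varepsilon$. That is, this sum is at least $\frac13+o(1)$ as $n\to\infty$.
   Context: For a permutation $\pi\in S_n$ (written as the word $\pi(1)\pi(2)\cdots\pi(n)$) and a permutation $\tau\in S_4$, the induced density of $\tau$ in $\pi$ is the fraction, among all $\binom n4$ sets of positions $i_1<i_2<i_3<i_4$, of those for which the sequence $\pi(i_1),\pi(i_2),\pi(i_3),\pi(i_4)$ is order-isomorphic to $\tau(1),\tau(2),\tau(3),\tau(4)$ (i.e. $\pi(i_s)<\pi(i_t)$ iff $\tau(s)<\tau(t)$). *)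

theory Defs
  imports "HOL-Combinatorics.Permutations" Complex_Main
begin

text \<open>A permutation \<pi> in S_n is a bijection of {1..n} (\<open>\<pi> permutes {1..n}\<close>);
  its word is \<pi>(1)\<pi>(2)...\<pi>(n). A pattern \<tau> in S_4 is given by its word as a list.\<close>

definition occurs_at :: "(nat \<Rightarrow> nat) \<Rightarrow> nat list \<Rightarrow> nat set \<Rightarrow> bool" where
  "occurs_at \<pi> \<tau> I \<longleftrightarrow>
     (let is = sorted_list_of_set I in
       \<forall>s < length \<tau>. \<forall>t < length \<tau>. (\<pi> (is ! s) < \<pi> (is ! t) \<longleftrightarrow> \<tau> ! s < \<tau> ! t))"

definition induced_density :: "nat list \<Rightarrow> nat \<Rightarrow> (nat \<Rightarrow> nat) \<Rightarrow> real" where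
  "induced_density \<tau> n \<pi> =
     real (card {I. I \<subseteq> {1..n} \<and> card I = length \<tau> \<and> occurs_at \<pi> \<tau> I})
     / real (n choose length \<tau>)"

definition patterns8 :: "nat list list" where
  "patterns8 = [[1,2,3,4],[1,2,4,3],[2,1,3,4],[2,1,4,3],[3,4,1,2],[4,3,1,2],[3,4,2,1],[4,3,2,1]]"

end

theory Submission
  imports Defs
begin

definition cnt :: "(nat \<Rightarrow> nat) \<Rightarrow> nat \<Rightarrow> nat \<Rightarrow> nat" where
  "cnt \<pi> i j = card {k \<in> {1..i}. \<pi> k \<le> j}"

definition vv :: "(nat \<Rightarrow> nat) \<Rightarrow> nat \<Rightarrow> nat \<Rightarrow> nat" where
  "vv \<pi> i j = card {k \<in> {1..i}. \<pi> k = j}"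

context
  fixes \<pi> :: "nat \<Rightarrow> nat" and n :: nat
  assumes perm: "\<pi> permutes {1..n}"
begin

lemma pinj: "inj \<pi>" using permutes_inj[OF perm] .

lemma pin: "k \<in> {1..n} \<Longrightarrow> \<pi> k \<in> {1..n}"
  using permutes_in_image[OF perm] by blast

lemma pge1: "1 \<le> k \<Longrightarrow> 1 \<le> \<pi> k"
proof (cases "k \<le> n")
  case True
  assume "1 \<le> k" then show ?thesis using pin[of k] True by auto
next
  case False
  then have "k \<notin> {1..n}" by auto
  then have "\<pi> k = k" using permutes_not_in[OF perm] by blast
  moreover assume "1 \<le> k"
  ultimately show ?thesis by simp
qed

lemma cnt_0i: "cnt \<pi> 0 j = 0" by (simp add: cnt_def)

lemma cnt_0j: "cnt \<pi> i 0 = 0"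
proof -
  have "{k\<in>{1..i}. \<pi> k \<le> 0} = {}"
  proof -
    { fix k assume "k\<in>{1..i}" "\<pi> k \<le> 0"
      then have "1 \<le> \<pi> k" using pge1[of k] by auto
      then have False using \<open>\<pi> k \<le> 0\<close> by simp }
    then show ?thesis by blast
  qed
  then show ?thesis by (simp add: cnt_def)
qed

lemma cnt_le: "cnt \<pi> i j \<le> i"
  unfolding cnt_def by (rule order.trans[OF card_mono[of "{1..i}"]]) auto

lemma cnt_nj: assumes "j \<le> n" shows "cnt \<pi> n j = j"
proof -
  have "\<pi> ` {k \<in> {1..n}. \<pi> k \<le> j} = {1..j}"
  proof
    show "\<pi> ` {k \<in> {1..n}. \<pi> k \<le> j} \<subseteq> {1..j}" using pge1 by auto
    show "{1..j} \<subseteq> \<pi> ` {k \<in> {1..n}. \<pi> k \<le> j}"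
    proof
      fix y assume y: "y \<in> {1..j}"
      then have "y \<in> \<pi> ` {1..n}" using permutes_image[OF perm] assms by auto
      then obtain k where "k \<in> {1..n}" "y = \<pi> k" by auto
      then show "y \<in> \<pi> ` {k \<in> {1..n}. \<pi> k \<le> j}" using y by auto
    qed
  qed
  then have "card (\<pi> ` {k \<in> {1..n}. \<pi> k \<le> j}) = j" by simp
  moreover have "card (\<pi> ` {k \<in> {1..n}. \<pi> k \<le> j}) = card {k \<in> {1..n}. \<pi> k \<le> j}"
    by (rule card_image) (use pinj in \<open>auto simp: inj_on_def inj_def\<close>)
  ultimately show ?thesis by (simp add: cnt_def)
qed

lemma cnt_in: assumes "i \<le> n" shows "cnt \<pi> i n = i"
proof -
  have "{k \<in> {1..i}. \<pi> k \<le> n} = {1..i}" using pin assms by fastforce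
  then show ?thesis by (simp add: cnt_def)
qed

lemma cnt_stepi: assumes "1 \<le> i" shows "cnt \<pi> i j = cnt \<pi> (i-1) j + (if \<pi> i \<le> j then 1 else 0)"
proof -
  have "{k \<in> {1..i}. \<pi> k \<le> j} = {k \<in> {1..i-1}. \<pi> k \<le> j} \<union> (if \<pi> i \<le> j then {i} else {})"
  proof (rule set_eqI)
    fix x show "x \<in> {k \<in> {1..i}. \<pi> k \<le> j} \<longleftrightarrow> x \<in> {k \<in> {1..i-1}. \<pi> k \<le> j} \<union> (if \<pi> i \<le> j then {i} else {})"
      using assms by (cases "x = i") auto
  qed
  then show ?thesis unfolding cnt_def using assms by (simp add: card_insert_if)
qed

lemma vv_le1: "vv \<pi> i j \<le> 1"
proof -
  have "{k \<in> {1..i}. \<pi> k = j} \<subseteq> {inv \<pi> j}"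
    using pinj by (auto simp: inv_f_f)
  then have "card {k \<in> {1..i}. \<pi> k = j} \<le> card {inv \<pi> j}"
    by (rule card_mono[rotated]) simp
  then show ?thesis by (simp add: vv_def)
qed

lemma vv_cnt: assumes "1 \<le> j" shows "cnt \<pi> m j = cnt \<pi> m (j-1) + vv \<pi> m j"
proof -
  have "{k\<in>{1..m}. \<pi> k \<le> j} = {k\<in>{1..m}. \<pi> k \<le> j-1} \<union> {k\<in>{1..m}. \<pi> k = j}"
    using assms by auto
  moreover have "{k\<in>{1..m}. \<pi> k \<le> j-1} \<inter> {k\<in>{1..m}. \<pi> k = j} = {}" using assms by auto
  ultimately show ?thesis unfolding cnt_def vv_def by (simp add: card_Un_disjoint)
qed

lemma vv_e: assumes "1 \<le> i" shows "vv \<pi> (i-1) (\<pi> i) = 0"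
proof -
  have "{k\<in>{1..i-1}. \<pi> k = \<pi> i} = {}" using pinj assms by (auto simp: inj_eq)
  then show ?thesis by (simp add: vv_def)
qed

lemma card_split: "finite A \<Longrightarrow> card {k\<in>A. P k} + card {k\<in>A. \<not> P k} = card A"
proof -
  assume f: "finite A"
  have "A = {k\<in>A. P k} \<union> {k\<in>A. \<not> P k}" by auto
  moreover have "{k\<in>A. P k} \<inter> {k\<in>A. \<not> P k} = {}" by auto
  ultimately show ?thesis using f by (metis (no_types, lifting) card_Un_disjoint finite_Un)
qed

lemma rr_card: assumes "i \<le> n" "j \<le> n"
  shows "real (card {k\<in>{1..n}. i<k \<and> j<\<pi> k}) = real n - real i - real j + real (cnt \<pi> i j)"
proof -
  have c1: "card {k\<in>{1..n}. \<pi> k \<le> j} + card {k\<in>{1..n}. \<not> \<pi> k \<le> j} = n"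
    using card_split[of "{1..n}"] by simp
  have c1': "card {k\<in>{1..n}. \<pi> k \<le> j} = j" using cnt_nj[OF assms(2)] by (simp add: cnt_def)
  have c2: "card {k\<in>{1..i}. \<pi> k \<le> j} + card {k\<in>{1..i}. \<not> \<pi> k \<le> j} = i"
    using card_split[of "{1..i}"] by simp
  have sp: "{k\<in>{1..n}. \<not> \<pi> k \<le> j} = {k\<in>{1..i}. \<not> \<pi> k \<le> j} \<union> {k\<in>{1..n}. i<k \<and> j<\<pi> k}"
    using assms by auto
  have "card {k\<in>{1..n}. \<not> \<pi> k \<le> j} = card {k\<in>{1..i}. \<not> \<pi> k \<le> j} + card {k\<in>{1..n}. i<k \<and> j<\<pi> k}"
    unfolding sp by (rule card_Un_disjoint) auto
  then show ?thesis using c1 c1' c2 unfolding cnt_def by linarith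
qed

lemma ss_card: assumes "i \<le> n" "1 \<le> j" "j \<le> n"
  shows "real (card {k\<in>{1..n}. i<k \<and> \<pi> k < j}) = real j - 1 - real (cnt \<pi> i (j-1))"
proof -
  have c1': "card {k\<in>{1..n}. \<pi> k \<le> j-1} = j-1" using cnt_nj[of "j-1"] assms by (simp add: cnt_def)
  have sp: "{k\<in>{1..n}. \<pi> k \<le> j-1} = {k\<in>{1..i}. \<pi> k \<le> j-1} \<union> {k\<in>{1..n}. i<k \<and> \<pi> k < j}"
    using assms by auto
  have "card {k\<in>{1..n}. \<pi> k \<le> j-1} = card {k\<in>{1..i}. \<pi> k \<le> j-1} + card {k\<in>{1..n}. i<k \<and> \<pi> k < j}"
    unfolding sp by (rule card_Un_disjoint) auto
  then show ?thesis using c1' assms unfolding cnt_def by (simp add: of_nat_diff)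
qed

lemma cLB: assumes "1 \<le> i" "i \<le> n" "1 \<le> j" "j \<le> n"
  shows "card {p\<in>{1..n}. p<i \<and> max (\<pi> p) (\<pi> i) = j} =
     (if \<pi> i = j then cnt \<pi> (i-1) (j-1) else 0) + (if \<pi> i < j then vv \<pi> (i-1) j else 0)"
proof (cases "\<pi> i = j")
  case True
  have "{p\<in>{1..n}. p<i \<and> max (\<pi> p) (\<pi> i) = j} = {k\<in>{1..i-1}. \<pi> k \<le> j-1}"
  proof (rule set_eqI)
    fix p
    have "p < i \<Longrightarrow> \<pi> p \<noteq> \<pi> i" using pinj by (auto simp: inj_eq)
    then show "p \<in> {p\<in>{1..n}. p<i \<and> max (\<pi> p) (\<pi> i) = j} \<longleftrightarrow> p \<in> {k\<in>{1..i-1}. \<pi> k \<le> j-1}"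
      using True assms by (auto simp: max_def)
  qed
  then show ?thesis using True by (simp add: cnt_def)
next
  case False
  show ?thesis
  proof (cases "\<pi> i < j")
    case True
    have "{p\<in>{1..n}. p<i \<and> max (\<pi> p) (\<pi> i) = j} = {k\<in>{1..i-1}. \<pi> k = j}"
      using True assms by (auto simp: max_def)
    then show ?thesis using True False by (simp add: vv_def)
  next
    case F2: False
    have "{p\<in>{1..n}. p<i \<and> max (\<pi> p) (\<pi> i) = j} = {}"
      using F2 False by (auto simp: max_def)
    then show ?thesis using F2 False by simp
  qed
qed

lemma cLA: assumes "1 \<le> i" "i \<le> n" "1 \<le> j" "j \<le> n"
  shows "card {p\<in>{1..n}. p<i \<and> min (\<pi> p) (\<pi> i) = j} =
     (if \<pi> i = j then (i-1) - cnt \<pi> (i-1) j else 0) + (if j < \<pi> i then vv \<pi> (i-1) j else 0)"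
proof (cases "\<pi> i = j")
  case True
  have "{p\<in>{1..n}. p<i \<and> min (\<pi> p) (\<pi> i) = j} = {k\<in>{1..i-1}. \<not> \<pi> k \<le> j}"
  proof (rule set_eqI)
    fix p
    have "p < i \<Longrightarrow> \<pi> p \<noteq> \<pi> i" using pinj by (auto simp: inj_eq)
    then show "p \<in> {p\<in>{1..n}. p<i \<and> min (\<pi> p) (\<pi> i) = j} \<longleftrightarrow> p \<in> {k\<in>{1..i-1}. \<not> \<pi> k \<le> j}"
      using True assms by (auto simp: min_def)
  qed
  moreover have "card {k\<in>{1..i-1}. \<pi> k \<le> j} + card {k\<in>{1..i-1}. \<not> \<pi> k \<le> j} = i - 1"
    using card_split[of "{1..i-1}"] by simp
  ultimately show ?thesis using True by (simp add: cnt_def)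
next
  case False
  show ?thesis
  proof (cases "j < \<pi> i")
    case True
    have "{p\<in>{1..n}. p<i \<and> min (\<pi> p) (\<pi> i) = j} = {k\<in>{1..i-1}. \<pi> k = j}"
      using True assms by (auto simp: min_def)
    then show ?thesis using True False by (simp add: vv_def)
  next
    case F2: False
    have "{p\<in>{1..n}. p<i \<and> min (\<pi> p) (\<pi> i) = j} = {}"
      using F2 False by (auto simp: min_def)
    then show ?thesis using F2 False by simp
  qed
qed

end

lemma choose2_Suc: "Suc c choose 2 = c + (c choose 2)"
  by (simp add: numeral_2_eq_2)

lemma sum_pairs_lt: "finite (S::nat set) \<Longrightarrow> (\<Sum>x\<in>S. \<Sum>y\<in>S. (of_bool (x<y) :: real)) = real (card S choose 2)"
proof (induction rule: finite_induct)
  case empty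
  then show ?case by simp
next
  case (insert a S)
  have "(\<Sum>x\<in>insert a S. \<Sum>y\<in>insert a S. (of_bool (x<y) :: real))
      = (\<Sum>y\<in>insert a S. (of_bool (a<y) :: real)) + (\<Sum>x\<in>S. \<Sum>y\<in>insert a S. (of_bool (x<y) :: real))"
    using insert by (simp add: sum.insert)
  also have "\<dots> = (\<Sum>y\<in>S. (of_bool (a<y) :: real)) + (\<Sum>x\<in>S. (of_bool (x<a) :: real)) + (\<Sum>x\<in>S. \<Sum>y\<in>S. (of_bool (x<y) :: real))"
    using insert by (simp add: sum.insert sum.distrib del: sum_of_bool_eq)
  also have "(\<Sum>y\<in>S. (of_bool (a<y) :: real)) + (\<Sum>x\<in>S. (of_bool (x<a) :: real)) = (\<Sum>y\<in>S. 1)"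
    unfolding sum.distrib[symmetric]
    by (rule sum.cong[OF refl]) (use insert in \<open>auto simp: of_bool_def\<close>)
  finally show ?case using insert by (simp add: choose2_Suc del: sum_of_bool_eq)
qed

lemma pairs_restr:
  fixes S A :: "nat set"
  assumes "S \<subseteq> A" "finite A"
  shows "(\<Sum>x\<in>A. \<Sum>y\<in>A. (of_bool (x<y \<and> x\<in>S \<and> y\<in>S) :: real)) = real (card S choose 2)"
proof -
  have "(\<Sum>x\<in>A. \<Sum>y\<in>A. (of_bool (x<y \<and> x\<in>S \<and> y\<in>S) :: real))
      = (\<Sum>x\<in>A. of_bool (x\<in>S) * (\<Sum>y\<in>A. of_bool (y\<in>S) * (of_bool (x<y) :: real)))"
    unfolding sum_distrib_left by (intro sum.cong refl) (simp add: of_bool_def)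
  also have "\<dots> = (\<Sum>x\<in>S. \<Sum>y\<in>S. (of_bool (x<y) :: real))"
    using assms by (simp add: Int_absorb1 Int_def[symmetric] del: sum_of_bool_eq)
  also have "\<dots> = real (card S choose 2)"
    using assms by (intro sum_pairs_lt) (rule finite_subset)
  finally show ?thesis .
qed

lemma card_as_sum: "finite A \<Longrightarrow> real (card {p\<in>A. P p}) = (\<Sum>p\<in>A. of_bool (P p))"
  by (simp add: Int_def)

lemma group_sum:
  assumes "finite A" "finite B" "\<And>p. p\<in>A \<Longrightarrow> Q p \<Longrightarrow> h p \<in> B"
  shows "(\<Sum>p\<in>A. of_bool (Q p) * (g (h p)::real)) = (\<Sum>j\<in>B. real (card {p\<in>A. Q p \<and> h p = j}) * g j)"
proof -
  have "(\<Sum>j\<in>B. real (card {p\<in>A. Q p \<and> h p = j}) * g j) = (\<Sum>j\<in>B. \<Sum>p\<in>A. of_bool (Q p \<and> h p = j) * g j)"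
    by (simp only: card_as_sum[OF assms(1)] sum_distrib_right)
  also have "\<dots> = (\<Sum>p\<in>A. \<Sum>j\<in>B. of_bool (Q p \<and> h p = j) * g j)" by (rule sum.swap)
  also have "\<dots> = (\<Sum>p\<in>A. of_bool (Q p) * g (h p))"
  proof (rule sum.cong[OF refl])
    fix p assume p: "p\<in>A"
    have "(\<Sum>j\<in>B. of_bool (Q p \<and> h p = j) * g j) = (\<Sum>j\<in>B. if h p = j then of_bool (Q p) * g j else 0)"
      by (rule sum.cong[OF refl]) auto
    also have "\<dots> = (if h p \<in> B then of_bool (Q p) * g (h p) else 0)" using assms(2) by (simp add: sum.delta)
    also have "\<dots> = of_bool (Q p) * g (h p)" using assms(3)[OF p] by auto
    finally show "(\<Sum>j\<in>B. of_bool (Q p \<and> h p = j) * g j) = of_bool (Q p) * g (h p)" .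
  qed
  finally show ?thesis by simp
qed

context
  fixes \<pi> :: "nat \<Rightarrow> nat" and n :: nat
  assumes perm: "\<pi> permutes {1..n}"
begin

lemma LB_sum:
  "(\<Sum>p2\<in>{1..n}. \<Sum>p1\<in>{1..n}. \<Sum>p3\<in>{1..n}. \<Sum>p4\<in>{1..n}.
      (of_bool (p1<p2 \<and> p2<p3 \<and> p3<p4 \<and> max (\<pi> p1) (\<pi> p2) < min (\<pi> p3) (\<pi> p4)) :: real))
   = (\<Sum>i\<in>{1..n}. \<Sum>j\<in>{1..n}. real (card {p\<in>{1..n}. p<i \<and> max (\<pi> p) (\<pi> i) = j})
          * real (card {k\<in>{1..n}. i<k \<and> j<\<pi> k} choose 2))"
proof (rule sum.cong[OF refl])
  fix i assume i: "i \<in> {1..n}"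
  define g where "g j = real (card {k\<in>{1..n}. i<k \<and> j<\<pi> k} choose 2)" for j
  have "(\<Sum>p1\<in>{1..n}. \<Sum>p3\<in>{1..n}. \<Sum>p4\<in>{1..n}.
      (of_bool (p1<i \<and> i<p3 \<and> p3<p4 \<and> max (\<pi> p1) (\<pi> i) < min (\<pi> p3) (\<pi> p4)) :: real))
    = (\<Sum>p1\<in>{1..n}. of_bool (p1<i) * g (max (\<pi> p1) (\<pi> i)))"
  proof (rule sum.cong[OF refl])
    fix p1 assume p1: "p1 \<in> {1..n}"
    let ?m = "max (\<pi> p1) (\<pi> i)"
    let ?S = "{k\<in>{1..n}. i<k \<and> ?m<\<pi> k}"
    have "(\<Sum>p3\<in>{1..n}. \<Sum>p4\<in>{1..n}.
      (of_bool (p1<i \<and> i<p3 \<and> p3<p4 \<and> ?m < min (\<pi> p3) (\<pi> p4)) :: real))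
      = (\<Sum>p3\<in>{1..n}. \<Sum>p4\<in>{1..n}. of_bool (p1<i) * (of_bool (p3<p4 \<and> p3\<in>?S \<and> p4\<in>?S) :: real))"
      by (intro sum.cong refl) (auto simp: of_bool_def)
    also have "\<dots> = of_bool (p1<i) * (\<Sum>p3\<in>{1..n}. \<Sum>p4\<in>{1..n}. (of_bool (p3<p4 \<and> p3\<in>?S \<and> p4\<in>?S) :: real))"
      by (simp only: sum_distrib_left)
    also have "\<dots> = of_bool (p1<i) * g ?m"
      unfolding g_def by (subst pairs_restr) auto
    finally show "(\<Sum>p3\<in>{1..n}. \<Sum>p4\<in>{1..n}.
      (of_bool (p1<i \<and> i<p3 \<and> p3<p4 \<and> ?m < min (\<pi> p3) (\<pi> p4)) :: real)) = of_bool (p1<i) * g ?m" .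
  qed
  also have "\<dots> = (\<Sum>j\<in>{1..n}. real (card {p\<in>{1..n}. p<i \<and> max (\<pi> p) (\<pi> i) = j}) * g j)"
    by (rule group_sum) (use pin[OF perm] i in \<open>auto simp: max_def\<close>)
  finally show "(\<Sum>p1\<in>{1..n}. \<Sum>p3\<in>{1..n}. \<Sum>p4\<in>{1..n}.
      (of_bool (p1<i \<and> i<p3 \<and> p3<p4 \<and> max (\<pi> p1) (\<pi> i) < min (\<pi> p3) (\<pi> p4)) :: real))
   = (\<Sum>j\<in>{1..n}. real (card {p\<in>{1..n}. p<i \<and> max (\<pi> p) (\<pi> i) = j})
          * real (card {k\<in>{1..n}. i<k \<and> j<\<pi> k} choose 2))" unfolding g_def .
qed

lemma LA_sum:
  "(\<Sum>p2\<in>{1..n}. \<Sum>p1\<in>{1..n}. \<Sum>p3\<in>{1..n}. \<Sum>p4\<in>{1..n}.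
      (of_bool (p1<p2 \<and> p2<p3 \<and> p3<p4 \<and> max (\<pi> p3) (\<pi> p4) < min (\<pi> p1) (\<pi> p2)) :: real))
   = (\<Sum>i\<in>{1..n}. \<Sum>j\<in>{1..n}. real (card {p\<in>{1..n}. p<i \<and> min (\<pi> p) (\<pi> i) = j})
          * real (card {k\<in>{1..n}. i<k \<and> \<pi> k < j} choose 2))"
proof (rule sum.cong[OF refl])
  fix i assume i: "i \<in> {1..n}"
  define g where "g j = real (card {k\<in>{1..n}. i<k \<and> \<pi> k < j} choose 2)" for j
  have "(\<Sum>p1\<in>{1..n}. \<Sum>p3\<in>{1..n}. \<Sum>p4\<in>{1..n}.
      (of_bool (p1<i \<and> i<p3 \<and> p3<p4 \<and> max (\<pi> p3) (\<pi> p4) < min (\<pi> p1) (\<pi> i)) :: real))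
    = (\<Sum>p1\<in>{1..n}. of_bool (p1<i) * g (min (\<pi> p1) (\<pi> i)))"
  proof (rule sum.cong[OF refl])
    fix p1 assume p1: "p1 \<in> {1..n}"
    let ?m = "min (\<pi> p1) (\<pi> i)"
    let ?S = "{k\<in>{1..n}. i<k \<and> \<pi> k < ?m}"
    have "(\<Sum>p3\<in>{1..n}. \<Sum>p4\<in>{1..n}.
      (of_bool (p1<i \<and> i<p3 \<and> p3<p4 \<and> max (\<pi> p3) (\<pi> p4) < ?m) :: real))
      = (\<Sum>p3\<in>{1..n}. \<Sum>p4\<in>{1..n}. of_bool (p1<i) * (of_bool (p3<p4 \<and> p3\<in>?S \<and> p4\<in>?S) :: real))"
      by (intro sum.cong refl) (auto simp: of_bool_def)
    also have "\<dots> = of_bool (p1<i) * (\<Sum>p3\<in>{1..n}. \<Sum>p4\<in>{1..n}. (of_bool (p3<p4 \<and> p3\<in>?S \<and> p4\<in>?S) :: real))"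
      by (simp only: sum_distrib_left)
    also have "\<dots> = of_bool (p1<i) * g ?m"
      unfolding g_def by (subst pairs_restr) auto
    finally show "(\<Sum>p3\<in>{1..n}. \<Sum>p4\<in>{1..n}.
      (of_bool (p1<i \<and> i<p3 \<and> p3<p4 \<and> max (\<pi> p3) (\<pi> p4) < ?m) :: real)) = of_bool (p1<i) * g ?m" .
  qed
  also have "\<dots> = (\<Sum>j\<in>{1..n}. real (card {p\<in>{1..n}. p<i \<and> min (\<pi> p) (\<pi> i) = j}) * g j)"
    by (rule group_sum) (use pin[OF perm] i in \<open>auto simp: min_def\<close>)
  finally show "(\<Sum>p1\<in>{1..n}. \<Sum>p3\<in>{1..n}. \<Sum>p4\<in>{1..n}.
      (of_bool (p1<i \<and> i<p3 \<and> p3<p4 \<and> max (\<pi> p3) (\<pi> p4) < min (\<pi> p1) (\<pi> i)) :: real))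
   = (\<Sum>j\<in>{1..n}. real (card {p\<in>{1..n}. p<i \<and> min (\<pi> p) (\<pi> i) = j})
          * real (card {k\<in>{1..n}. i<k \<and> \<pi> k < j} choose 2))" unfolding g_def .
qed

end

definition C2 :: "real \<Rightarrow> real" where "C2 x = x*(x-1)/2"
definition Phi :: "real\<Rightarrow>real\<Rightarrow>real\<Rightarrow>real\<Rightarrow>real\<Rightarrow>real\<Rightarrow>real\<Rightarrow>real" where
 "Phi n i j A u v e = (e*A + u*v) * C2 (n - i - j + A + u + v + e) + (e*(i - 1 - A - v) + (1 - u - e)*v) * C2 (j - 1 - A - u)"
definition G1 :: "real\<Rightarrow>real\<Rightarrow>real\<Rightarrow>real\<Rightarrow>real" where
 "G1 n i j a = n^2*a/2 + n*a^2/2 - n*j*a - n*i*a - i*a^2/2 + i*j*a + i*j^2/2 + i^2*a/2 - i^2*j^2/(2*n)"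
definition H0 :: "real\<Rightarrow>real\<Rightarrow>real\<Rightarrow>real\<Rightarrow>real" where
 "H0 n i j a = n*a^2/2 + a^3/3 - j*a^2 - i*a^2/2 + i*j^2*a/n - i^2*j^3/(3*n^2)"
definition Pos :: "real\<Rightarrow>real\<Rightarrow>real\<Rightarrow>real\<Rightarrow>real\<Rightarrow>real\<Rightarrow>real\<Rightarrow>real" where
 "Pos n i j A u v e = (n*(A+u+v+e) - i*j)^2/n^2 + e*(n*(A+u+v+e) - i*j)^2/(2*n)"
definition dGH :: "real\<Rightarrow>real\<Rightarrow>real\<Rightarrow>real\<Rightarrow>real\<Rightarrow>real\<Rightarrow>real\<Rightarrow>real" where
 "dGH n i j A u v e = (v+e)*G1 n i j (A+u+v+e) - v*G1 n (i-1) j (A+v) + (H0 n i j (A+u+v+e) - H0 n i (j-1) (A+u))"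

lemma id000: "n \<noteq> 0 \<Longrightarrow> Phi n i j A 0 0 0 - Pos n i j A 0 0 0 - dGH n i j A 0 0 0 = (1)*i*A/(n) + (-1)*i^2*j/(n^2) + (1/3)*i^2/(n^2)"
  unfolding Phi_def Pos_def dGH_def G1_def H0_def C2_def
  by (simp add: field_simps power2_eq_square power3_eq_cube)

lemma id100: "n \<noteq> 0 \<Longrightarrow> Phi n i j A 1 0 0 - Pos n i j A 1 0 0 - dGH n i j A 1 0 0 = (1)*i*A/(n) + (-1)*i^2*j/(n^2) + (1)*i/(n) + (1/3)*i^2/(n^2)"
  unfolding Phi_def Pos_def dGH_def G1_def H0_def C2_def
  by (simp add: field_simps power2_eq_square power3_eq_cube)

lemma id010: "n \<noteq> 0 \<Longrightarrow> Phi n i j A 0 1 0 - Pos n i j A 0 1 0 - dGH n i j A 0 1 0 = (-3/2)*j + (2)*i*j/(n) + (1/2)*n + (-1/2)*i + (-1/2)*j^2/(n) + (1)*i*A/(n) + (-1)*i^2*j/(n^2) + (2/3) + (1/3)*i^2/(n^2)"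
  unfolding Phi_def Pos_def dGH_def G1_def H0_def C2_def
  by (simp add: field_simps power2_eq_square power3_eq_cube)

lemma id110: "n \<noteq> 0 \<Longrightarrow> Phi n i j A 1 1 0 - Pos n i j A 1 1 0 - dGH n i j A 1 1 0 = (1/2)*j + (2)*i*j/(n) + (-1/2)*n + (1/2)*i + (-1/2)*j^2/(n) + (-2)*A + (1)*i*A/(n) + (-1)*i^2*j/(n^2) + (-10/3) + (1)*i/(n) + (1/3)*i^2/(n^2)"
  unfolding Phi_def Pos_def dGH_def G1_def H0_def C2_def
  by (simp add: field_simps power2_eq_square power3_eq_cube)

lemma id001: "n \<noteq> 0 \<Longrightarrow> Phi n i j A 0 0 1 - Pos n i j A 0 0 1 - dGH n i j A 0 0 1 = (-5/2)*n*A + (3)*i*A + (4)*j*A + (-5/2)*A^2 + (-3/2)*i*j + (-1/2)*j^2 + (-1/2)*n^2 + (1)*n*j + (1)*n*i + (-1/2)*i^2 + (-1)*i*j^2/(n) + (2)*i + (5/2)*j + (-11/2)*A + (2)*i*j/(n) + (-3/2)*n + (1)*i*A/(n) + (-1)*i^2*j/(n^2) + (-7/3) + (1/3)*i^2/(n^2)"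
  unfolding Phi_def Pos_def dGH_def G1_def H0_def C2_def
  by (simp add: field_simps power2_eq_square power3_eq_cube)


lemma G1_bd: "n \<noteq> 0 \<Longrightarrow> G1 n n j j = 0"
  unfolding G1_def by (simp add: field_simps power2_eq_square)

lemma H0_top: "n \<noteq> 0 \<Longrightarrow> H0 n i n i = i^2*(n-i)/6"
  unfolding H0_def by (simp add: field_simps power2_eq_square power3_eq_cube)

lemma H0_bot: "H0 n i 0 0 = 0"
  unfolding H0_def by simp

lemma sum_cubic: "(\<Sum>i\<in>{1..m}. real i^2 * (x - real i)) = x*m*(m+1)*(2*m+1)/6 - m^2*(m+1)^2/4"
  by (induction m) (simp_all add: field_simps power2_eq_square)

lemma core:
  fixes n i j A u v e :: real
  assumes n: "1 \<le> n" and i: "1 \<le> i" "i \<le> n" and j: "1 \<le> j" "j \<le> n" and A: "0 \<le> A" "A \<le> n"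
  and bits: "(u = 0 \<and> v = 0 \<and> e = 0) \<or> (u = 1 \<and> v = 0 \<and> e = 0) \<or> (u=0 \<and> v = 1 \<and> e = 0) \<or> (u = 1 \<and> v = 1 \<and> e = 0) \<or> (u = 0 \<and> v = 0 \<and> e = 1)"
  shows "Phi n i j A u v e \<ge> Pos n i j A u v e + dGH n i j A u v e - (10*n + 30*n^2*e)"
proof -
  have n0: "n \<noteq> 0" "0 < n" using n by auto
  have "i*A \<le> n*n" by (intro mult_mono) (use assms in auto)
  have "0 \<le> i*A" using assms by auto
  have "i*j \<le> n*n" by (intro mult_mono) (use assms in auto)
  have "0 \<le> i*j" using assms by auto
  have "j*A \<le> n*n" by (intro mult_mono) (use assms in auto)
  have "0 \<le> j*A" using assms by auto
  have "n*A \<le> n*n" by (intro mult_mono) (use assms in auto)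
  have "A*A \<le> n*n" by (intro mult_mono) (use assms in auto)
  have "j*j \<le> n*n" by (intro mult_mono) (use assms in auto)
  have "i*i \<le> n*n" by (intro mult_mono) (use assms in auto)
  have "0 \<le> n*j" "0 \<le> n*i" using assms by auto
  have "n \<le> n*n" using n by (simp add: mult_le_cancel_left1)
  have ii: "i*i*j \<le> n*n*n" by (intro mult_mono) (use assms \<open>i*i \<le> n*n\<close> in auto)
  have ij2: "i*(j*j) \<le> n*(n*n)" by (intro mult_mono) (use assms \<open>j*j \<le> n*n\<close> in auto)
  have b1: "0 \<le> i*A/n" using assms by auto
  have b2: "i^2*j/n^2 \<le> n" using ii n0 by (simp add: pos_divide_le_eq power2_eq_square mult.assoc)
  have b3: "0 \<le> i^2/n^2" by auto
  have b4: "0 \<le> i*j/n" using assms by auto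
  have b5: "j^2/n \<le> n" using \<open>j*j \<le> n*n\<close> n0 by (simp add: pos_divide_le_eq power2_eq_square)
  have b6: "i*j^2/n \<le> n^2" using ij2 n0 by (simp add: pos_divide_le_eq power2_eq_square mult.assoc)
  have b7: "0 \<le> i/n" using assms by auto
  have b8: "i*j/n \<le> n" using \<open>i*j \<le> n*n\<close> n0 by (simp add: pos_divide_le_eq)
  have b9: "i*A/n \<le> n" using \<open>i*A \<le> n*n\<close> n0 by (simp add: pos_divide_le_eq)
  have b10: "i/n \<le> 1" using assms n0 by (simp add: pos_divide_le_eq)
  have b11: "i^2/n^2 \<le> 1" using \<open>i*i \<le> n*n\<close> n0 by (simp add: pos_divide_le_eq power2_eq_square)
  have b12: "0 \<le> i*i/(3*(n*n))" by simp
  note bs = b12 b1 b2 b3 b4 b5 b6 b7 b8 b9 b10 b11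
  from bits show ?thesis
  proof (elim disjE conjE)
    assume "u = 0" "v = 0" "e = 0"
    then show ?thesis using id000[OF n0(1), of i j A] bs n by (simp only: power2_eq_square; linarith)
  next
    assume "u = 1" "v = 0" "e = 0"
    then show ?thesis using id100[OF n0(1), of i j A] bs n by (simp only: power2_eq_square; linarith)
  next
    assume "u = 0" "v = 1" "e = 0"
    then show ?thesis using id010[OF n0(1), of i j A] bs assms by (simp only: power2_eq_square; linarith)
  next
    assume "u = 1" "v = 1" "e = 0"
    then show ?thesis using id110[OF n0(1), of i j A] bs assms by (simp only: power2_eq_square; linarith)
  next
    assume "u = 0" "v = 0" "e = 1"
    then show ?thesis using id001[OF n0(1), of i j A] bs assms
      \<open>0 \<le> i*A\<close> \<open>0 \<le> j*A\<close> \<open>i*j \<le> n*n\<close> \<open>n*A \<le> n*n\<close> \<open>A*A \<le> n*n\<close> \<open>j*j \<le> n*n\<close> \<open>i*i \<le> n*n\<close>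
      \<open>0 \<le> n*j\<close> \<open>0 \<le> n*i\<close> \<open>n \<le> n*n\<close> by (simp only: power2_eq_square; linarith)
  qed
qed

definition ordiso :: "nat list \<Rightarrow> nat list \<Rightarrow> bool" where
  "ordiso ys \<tau> \<longleftrightarrow> (\<forall>s < length \<tau>. \<forall>t < length \<tau>. (ys ! s < ys ! t \<longleftrightarrow> \<tau> ! s < \<tau> ! t))"

lemma all4: "(\<forall>s<Suc(Suc(Suc(Suc 0))). P s) \<longleftrightarrow> P 0 \<and> P (Suc 0) \<and> P (Suc (Suc 0)) \<and> P (Suc (Suc (Suc 0)))"
  by (auto simp: less_Suc_eq)

lemma ordiso4: "ordiso [y1,y2,y3,y4] [a,b,c,d] \<longleftrightarrow>
   ((y1<y2) = (a<b) \<and> (y1<y3) = (a<c) \<and> (y1<y4) = (a<d) \<and> (y2<y1) = (b<a) \<and> (y2<y3) = (b<c) \<and> (y2<y4) = (b<d)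
  \<and> (y3<y1) = (c<a) \<and> (y3<y2) = (c<b) \<and> (y3<y4) = (c<d) \<and> (y4<y1) = (d<a) \<and> (y4<y2) = (d<b) \<and> (y4<y3) = (d<c))"
  unfolding ordiso_def by (simp add: all4)


lemma pt0: "ordiso [y1,y2,y3,y4] [1,2,3,4] \<longleftrightarrow> y1<y2 \<and> y2<y3 \<and> y3<y4"
  unfolding ordiso4 by auto
lemma pt1: "ordiso [y1,y2,y3,y4] [1,2,4,3] \<longleftrightarrow> y1<y2 \<and> y2<y4 \<and> y4<y3"
  unfolding ordiso4 by auto
lemma pt2: "ordiso [y1,y2,y3,y4] [2,1,3,4] \<longleftrightarrow> y2<y1 \<and> y1<y3 \<and> y3<y4"
  unfolding ordiso4 by auto
lemma pt3: "ordiso [y1,y2,y3,y4] [2,1,4,3] \<longleftrightarrow> y2<y1 \<and> y1<y4 \<and> y4<y3"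
  unfolding ordiso4 by auto
lemma pt4: "ordiso [y1,y2,y3,y4] [3,4,1,2] \<longleftrightarrow> y3<y4 \<and> y4<y1 \<and> y1<y2"
  unfolding ordiso4 by auto
lemma pt5: "ordiso [y1,y2,y3,y4] [4,3,1,2] \<longleftrightarrow> y3<y4 \<and> y4<y2 \<and> y2<y1"
  unfolding ordiso4 by auto
lemma pt6: "ordiso [y1,y2,y3,y4] [3,4,2,1] \<longleftrightarrow> y4<y3 \<and> y3<y1 \<and> y1<y2"
  unfolding ordiso4 by auto
lemma pt7: "ordiso [y1,y2,y3,y4] [4,3,2,1] \<longleftrightarrow> y4<y3 \<and> y3<y2 \<and> y2<y1"
  unfolding ordiso4 by auto

lemma pat_sum:
  fixes y1 y2 y3 y4 :: nat
  assumes d: "distinct [y1,y2,y3,y4]"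
  shows "(\<Sum>\<tau>\<leftarrow>patterns8. of_bool (ordiso [y1,y2,y3,y4] \<tau>) :: real)
     = of_bool (max y1 y2 < min y3 y4) + of_bool (max y3 y4 < min y1 y2)"
proof -
  have base: "(\<Sum>\<tau>\<leftarrow>patterns8. of_bool (ordiso [y1,y2,y3,y4] \<tau>) :: real) =
     of_bool (y1<y2 \<and> y2<y3 \<and> y3<y4) + (of_bool (y1<y2 \<and> y2<y4 \<and> y4<y3) + (of_bool (y2<y1 \<and> y1<y3 \<and> y3<y4) +
     (of_bool (y2<y1 \<and> y1<y4 \<and> y4<y3) + (of_bool (y3<y4 \<and> y4<y1 \<and> y1<y2) + (of_bool (y3<y4 \<and> y4<y2 \<and> y2<y1) +
     (of_bool (y4<y3 \<and> y3<y1 \<and> y1<y2) + (of_bool (y4<y3 \<and> y3<y2 \<and> y2<y1) + 0)))))))"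
    unfolding patterns8_def by (simp only: list.map sum_list.Cons sum_list.Nil pt0 pt1 pt2 pt3 pt4 pt5 pt6 pt7)
  have "y1 \<noteq> y2" "y3 \<noteq> y4" using d by auto
  then consider "y1<y2" "y3<y4" | "y1<y2" "y4<y3" | "y2<y1" "y3<y4" | "y2<y1" "y4<y3"
    by (metis linorder_neq_iff)
  then show ?thesis
  proof cases
    case 1
    then have f: "\<not> y2<y1" "\<not> y4<y3" "max y1 y2 = y2" "min y1 y2 = y1" "max y3 y4 = y4" "min y3 y4 = y3" by auto
    show ?thesis unfolding base using 1 by (simp only: f simp_thms) simp
  next
    case 2
    then have f: "\<not> y2<y1" "\<not> y3<y4" "max y1 y2 = y2" "min y1 y2 = y1" "max y3 y4 = y3" "min y3 y4 = y4" by auto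
    show ?thesis unfolding base using 2 by (simp only: f simp_thms) simp
  next
    case 3
    then have f: "\<not> y1<y2" "\<not> y4<y3" "max y1 y2 = y1" "min y1 y2 = y2" "max y3 y4 = y4" "min y3 y4 = y3" by auto
    show ?thesis unfolding base using 3 by (simp only: f simp_thms) simp
  next
    case 4
    then have f: "\<not> y1<y2" "\<not> y3<y4" "max y1 y2 = y1" "min y1 y2 = y2" "max y3 y4 = y3" "min y3 y4 = y4" by auto
    show ?thesis unfolding base using 4 by (simp only: f simp_thms) simp
  qed
qed

definition Four :: "nat \<Rightarrow> nat set set" where "Four n = {I. I \<subseteq> {1..n} \<and> card I = 4}"

lemma finite_Four: "finite (Four n)"
  unfolding Four_def by (rule finite_subset[of _ "Pow {1..n}"]) auto

lemma dens_list:
  "(\<forall>\<tau>\<in>set L. length \<tau> = 4) \<Longrightarrow> (\<Sum>\<tau>\<leftarrow>L. induced_density \<tau> n \<pi>)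
    = (\<Sum>I\<in>Four n. \<Sum>\<tau>\<leftarrow>L. (of_bool (occurs_at \<pi> \<tau> I)::real)) / real (n choose 4)"
proof (induction L)
  case Nil
  then show ?case by simp
next
  case (Cons \<tau> L)
  have "induced_density \<tau> n \<pi> = real (card {I\<in>Four n. occurs_at \<pi> \<tau> I}) / real (n choose 4)"
    using Cons.prems unfolding induced_density_def Four_def by (simp add: conj_assoc)
  also have "\<dots> = (\<Sum>I\<in>Four n. (of_bool (occurs_at \<pi> \<tau> I)::real)) / real (n choose 4)"
    by (simp only: card_as_sum[OF finite_Four])
  finally show ?case using Cons by (simp add: sum.distrib add_divide_distrib del: sum_of_bool_eq)
qed

lemma len4: "length xs = 4 \<Longrightarrow> \<exists>a b c d. xs = [a,b,c,d]"
  by (auto simp: numeral_eq_Suc length_Suc_conv)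

lemma sl4: "p1<p2 \<Longrightarrow> p2<p3 \<Longrightarrow> p3<p4 \<Longrightarrow> sorted_list_of_set {p1,p2,p3,p4} = [p1,p2,p3,p4::nat]"
  by (rule sorted_distinct_set_unique) auto

lemma four_bij:
  "bij_betw (\<lambda>(p1,p2,p3,p4). {p1,p2,p3,p4::nat})
     {t\<in>{1..n}\<times>{1..n}\<times>{1..n}\<times>{1..n}. case t of (p1,p2,p3,p4) \<Rightarrow> p1<p2 \<and> p2<p3 \<and> p3<p4} (Four n)"
proof (rule bij_betwI')
  fix x y :: "nat\<times>nat\<times>nat\<times>nat"
  assume x: "x \<in> {t\<in>{1..n}\<times>{1..n}\<times>{1..n}\<times>{1..n}. case t of (p1,p2,p3,p4) \<Rightarrow> p1<p2 \<and> p2<p3 \<and> p3<p4}"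
    and y: "y \<in> {t\<in>{1..n}\<times>{1..n}\<times>{1..n}\<times>{1..n}. case t of (p1,p2,p3,p4) \<Rightarrow> p1<p2 \<and> p2<p3 \<and> p3<p4}"
  obtain a b c d where xd: "x = (a,b,c,d)" by (cases x) auto
  obtain a' b' c' d' where yd: "y = (a',b',c',d')" by (cases y) auto
  show "((case x of (p1,p2,p3,p4) \<Rightarrow> {p1,p2,p3,p4}) = (case y of (p1,p2,p3,p4) \<Rightarrow> {p1,p2,p3,p4})) = (x = y)"
  proof
    assume "(case x of (p1,p2,p3,p4) \<Rightarrow> {p1,p2,p3,p4}) = (case y of (p1,p2,p3,p4) \<Rightarrow> {p1,p2,p3,p4})"
    then have "{a,b,c,d} = {a',b',c',d'}" using xd yd by simp
    then have "sorted_list_of_set {a,b,c,d} = sorted_list_of_set {a',b',c',d'}" by simp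
    then have "[a,b,c,d] = [a',b',c',d']" using x y xd yd by (simp add: sl4)
    then show "x = y" using xd yd by simp
  qed simp
next
  fix x :: "nat\<times>nat\<times>nat\<times>nat"
  assume x: "x \<in> {t\<in>{1..n}\<times>{1..n}\<times>{1..n}\<times>{1..n}. case t of (p1,p2,p3,p4) \<Rightarrow> p1<p2 \<and> p2<p3 \<and> p3<p4}"
  obtain a b c d where xd: "x = (a,b,c,d)" by (cases x) auto
  show "(case x of (p1,p2,p3,p4) \<Rightarrow> {p1,p2,p3,p4}) \<in> Four n"
    using x xd unfolding Four_def by auto
next
  fix I assume I: "I \<in> Four n"
  then have fin: "finite I" unfolding Four_def by (auto intro: finite_subset)
  let ?xs = "sorted_list_of_set I"
  have "length ?xs = 4" using I unfolding Four_def by simp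
  then obtain a b c d where xs: "?xs = [a,b,c,d]" using len4 by blast
  have "sorted ?xs" "distinct ?xs" by auto
  then have ord: "a<b" "b<c" "c<d" unfolding xs by auto
  have "set ?xs = I" using fin by simp
  then have Ieq: "I = {a,b,c,d}" unfolding xs by auto
  show "\<exists>x\<in>{t\<in>{1..n}\<times>{1..n}\<times>{1..n}\<times>{1..n}. case t of (p1,p2,p3,p4) \<Rightarrow> p1<p2 \<and> p2<p3 \<and> p3<p4}.
          I = (case x of (p1,p2,p3,p4) \<Rightarrow> {p1,p2,p3,p4})"
    using I ord Ieq unfolding Four_def by (intro bexI[of _ "(a,b,c,d)"]) auto
qed

lemma four_sum:
  "(\<Sum>I\<in>Four n. g I) = (\<Sum>p1\<in>{1..n}. \<Sum>p2\<in>{1..n}. \<Sum>p3\<in>{1..n}. \<Sum>p4\<in>{1..n}.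
      of_bool (p1<p2 \<and> p2<p3 \<and> p3<p4) * (g {p1,p2,p3,p4} :: real))"
proof -
  let ?U = "{1..n}\<times>{1..n}\<times>{1..n}\<times>{(1::nat)..n}"
  let ?c = "\<lambda>t. case t of (p1,p2,p3,p4) \<Rightarrow> p1<p2 \<and> p2<p3 \<and> p3<(p4::nat)"
  let ?f = "\<lambda>t. case t of (p1,p2,p3,p4) \<Rightarrow> {p1,p2,p3,p4::nat}"
  have "(\<Sum>I\<in>Four n. g I) = (\<Sum>t\<in>{t\<in>?U. ?c t}. g (?f t))"
    using sum.reindex_bij_betw[OF four_bij, of g n] by simp
  also have "\<dots> = (\<Sum>t\<in>?U. if ?c t then g (?f t) else 0)"
    by (rule sum.inter_filter) simp
  also have "\<dots> = (\<Sum>t\<in>?U. of_bool (?c t) * g (?f t))"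
    by (rule sum.cong[OF refl]) simp
  also have "\<dots> = (\<Sum>p1\<in>{1..n}. \<Sum>p2\<in>{1..n}. \<Sum>p3\<in>{1..n}. \<Sum>p4\<in>{1..n}.
      of_bool (p1<p2 \<and> p2<p3 \<and> p3<p4) * (g {p1,p2,p3,p4} :: real))"
    by (simp add: sum.cartesian_product del: sum_of_bool_mult_eq) (rule sum.cong[OF refl], auto split: prod.splits)
  finally show ?thesis .
qed

lemma occ_ordiso:
  assumes "p1<p2" "p2<p3" "p3<p4" "length \<tau> = 4"
  shows "occurs_at \<pi> \<tau> {p1,p2,p3,p4} \<longleftrightarrow> ordiso [\<pi> p1, \<pi> p2, \<pi> p3, \<pi> p4] \<tau>"
proof -
  have gen: "length xs = length \<tau> \<Longrightarrow> (\<forall>s<length \<tau>. \<forall>t<length \<tau>. (\<pi> (xs!s) < \<pi> (xs!t) \<longleftrightarrow> \<tau>!s<\<tau>!t)) = ordiso (map \<pi> xs) \<tau>" for xs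
    by (simp add: ordiso_def)
  show ?thesis unfolding occurs_at_def Let_def sl4[OF assms(1-3)]
    using gen[of "[p1,p2,p3,p4]"] assms(4) by simp
qed

lemma tele: fixes f :: "nat \<Rightarrow> real" shows "(\<Sum>i\<in>{1..m}. f i - f (i - 1)) = f m - f 0"
  by (induction m) (simp_all add: sum.cl_ivl_Suc)

lemma len8: "\<forall>\<tau>\<in>set patterns8. length \<tau> = 4"
  by (simp add: patterns8_def)

context
  fixes \<pi> :: "nat \<Rightarrow> nat" and n :: nat
  assumes perm: "\<pi> permutes {1..n}"
begin

definition Phiact :: "nat \<Rightarrow> nat \<Rightarrow> real" where
  "Phiact i j = real (card {p\<in>{1..n}. p<i \<and> max (\<pi> p) (\<pi> i) = j}) * real (card {k\<in>{1..n}. i<k \<and> j<\<pi> k} choose 2)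
     + real (card {p\<in>{1..n}. p<i \<and> min (\<pi> p) (\<pi> i) = j}) * real (card {k\<in>{1..n}. i<k \<and> \<pi> k < j} choose 2)"

lemma pat_tuple:
  assumes "p1 \<in> {1..n}" "p2 \<in> {1..n}" "p3 \<in> {1..n}" "p4 \<in> {1..n}"
  shows "of_bool (p1<p2 \<and> p2<p3 \<and> p3<p4) * (\<Sum>\<tau>\<leftarrow>patterns8. (of_bool (occurs_at \<pi> \<tau> {p1,p2,p3,p4})::real))
    = of_bool (p1<p2 \<and> p2<p3 \<and> p3<p4 \<and> max (\<pi> p1) (\<pi> p2) < min (\<pi> p3) (\<pi> p4))
     + of_bool (p1<p2 \<and> p2<p3 \<and> p3<p4 \<and> max (\<pi> p3) (\<pi> p4) < min (\<pi> p1) (\<pi> p2))"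
proof (cases "p1<p2 \<and> p2<p3 \<and> p3<p4")
  case True
  have "(\<Sum>\<tau>\<leftarrow>patterns8. (of_bool (occurs_at \<pi> \<tau> {p1,p2,p3,p4})::real))
      = (\<Sum>\<tau>\<leftarrow>patterns8. (of_bool (ordiso [\<pi> p1, \<pi> p2, \<pi> p3, \<pi> p4] \<tau>)::real))"
    by (rule arg_cong[of _ _ sum_list], rule map_cong[OF refl]) (use True len8 occ_ordiso in auto)
  also have "\<dots> = of_bool (max (\<pi> p1) (\<pi> p2) < min (\<pi> p3) (\<pi> p4)) + of_bool (max (\<pi> p3) (\<pi> p4) < min (\<pi> p1) (\<pi> p2))"
    by (rule pat_sum) (use True pinj[OF perm] in \<open>auto simp: inj_eq\<close>)
  finally show ?thesis using True by simp
next
  case False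
  then have a: "\<not> (p1<p2 \<and> p2<p3 \<and> p3<p4 \<and> max (\<pi> p1) (\<pi> p2) < min (\<pi> p3) (\<pi> p4))"
    "\<not> (p1<p2 \<and> p2<p3 \<and> p3<p4 \<and> max (\<pi> p3) (\<pi> p4) < min (\<pi> p1) (\<pi> p2))" by auto
  show ?thesis by (simp only: a False of_bool_eq(1) mult_zero_left add_0)
qed

lemma S_eq:
  "(\<Sum>I\<in>Four n. \<Sum>\<tau>\<leftarrow>patterns8. (of_bool (occurs_at \<pi> \<tau> I)::real)) = (\<Sum>i\<in>{1..n}. \<Sum>j\<in>{1..n}. Phiact i j)"
proof -
  have "(\<Sum>I\<in>Four n. \<Sum>\<tau>\<leftarrow>patterns8. (of_bool (occurs_at \<pi> \<tau> I)::real))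
    = (\<Sum>p1\<in>{1..n}. \<Sum>p2\<in>{1..n}. \<Sum>p3\<in>{1..n}. \<Sum>p4\<in>{1..n}.
        (of_bool (p1<p2 \<and> p2<p3 \<and> p3<p4 \<and> max (\<pi> p1) (\<pi> p2) < min (\<pi> p3) (\<pi> p4)) :: real)
     + of_bool (p1<p2 \<and> p2<p3 \<and> p3<p4 \<and> max (\<pi> p3) (\<pi> p4) < min (\<pi> p1) (\<pi> p2)))"
    unfolding four_sum by (intro sum.cong refl pat_tuple)
  also have "\<dots> = (\<Sum>p1\<in>{1..n}. \<Sum>p2\<in>{1..n}. \<Sum>p3\<in>{1..n}. \<Sum>p4\<in>{1..n}.
        (of_bool (p1<p2 \<and> p2<p3 \<and> p3<p4 \<and> max (\<pi> p1) (\<pi> p2) < min (\<pi> p3) (\<pi> p4)) :: real)) +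
      (\<Sum>p1\<in>{1..n}. \<Sum>p2\<in>{1..n}. \<Sum>p3\<in>{1..n}. \<Sum>p4\<in>{1..n}.
        (of_bool (p1<p2 \<and> p2<p3 \<and> p3<p4 \<and> max (\<pi> p3) (\<pi> p4) < min (\<pi> p1) (\<pi> p2)) :: real))"
    by (simp only: sum.distrib)
  also have "\<dots> = (\<Sum>p2\<in>{1..n}. \<Sum>p1\<in>{1..n}. \<Sum>p3\<in>{1..n}. \<Sum>p4\<in>{1..n}.
        (of_bool (p1<p2 \<and> p2<p3 \<and> p3<p4 \<and> max (\<pi> p1) (\<pi> p2) < min (\<pi> p3) (\<pi> p4)) :: real)) +
      (\<Sum>p2\<in>{1..n}. \<Sum>p1\<in>{1..n}. \<Sum>p3\<in>{1..n}. \<Sum>p4\<in>{1..n}.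
        (of_bool (p1<p2 \<and> p2<p3 \<and> p3<p4 \<and> max (\<pi> p3) (\<pi> p4) < min (\<pi> p1) (\<pi> p2)) :: real))"
    by (intro arg_cong2[where f="(+)"] sum.swap)
  also have "\<dots> = (\<Sum>i\<in>{1..n}. \<Sum>j\<in>{1..n}. Phiact i j)"
    unfolding LB_sum[OF perm] LA_sum[OF perm] Phiact_def by (simp only: sum.distrib)
  finally show ?thesis .
qed

end

lemma choose2_real: "real (m choose 2) = C2 (real m)"
  by (induction m) (simp_all add: choose2_Suc C2_def field_simps)

lemma choose3_Suc: "Suc m choose 3 = (m choose 2) + (m choose 3)"
  by (simp add: numeral_3_eq_3 numeral_2_eq_2)
lemma choose4_Suc: "Suc m choose 4 = (m choose 3) + (m choose 4)"
  by (simp add: numeral_eq_Suc)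
lemma choose2r: "real (m choose 2) = real m * (real m - 1) / 2"
  using choose2_real by (simp add: C2_def)
lemma choose3r: "real (m choose 3) = real m * (real m - 1) * (real m - 2) / 6"
  by (induction m) (simp_all add: choose3_Suc choose2r field_simps)
lemma choose4r: "real (m choose 4) = real m * (real m - 1) * (real m - 2) * (real m - 3) / 24"
  by (induction m) (simp_all add: choose4_Suc choose3r field_simps)

context
  fixes \<pi> :: "nat \<Rightarrow> nat" and n :: nat
  assumes perm: "\<pi> permutes {1..n}"
begin

definition aa :: "nat \<Rightarrow> nat \<Rightarrow> real" where "aa i j = real (cnt \<pi> i j)"
definition Gf :: "nat \<Rightarrow> nat \<Rightarrow> real" where
  "Gf i j = (aa i j - aa i (j-1)) * G1 (real n) (real i) (real j) (aa i j)"
definition Hf :: "nat \<Rightarrow> nat \<Rightarrow> real" where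
  "Hf i j = H0 (real n) (real i) (real j) (aa i j)"

lemma cell:
  assumes i: "1 \<le> i" "i \<le> n" and j: "1 \<le> j" "j \<le> n"
  shows "Phiact \<pi> n i j \<ge> (Gf i j - Gf (i-1) j) + (Hf i j - Hf i (j-1)) - (10*real n + 30*(real n)^2 * of_bool (\<pi> i = j))"
proof -
  define A where "A = real (cnt \<pi> (i-1) (j-1))"
  define u where "u = (of_bool (\<pi> i < j) :: real)"
  define v where "v = real (vv \<pi> (i-1) j)"
  define e where "e = (of_bool (\<pi> i = j) :: real)"
  have st1: "cnt \<pi> i j = cnt \<pi> (i-1) j + (if \<pi> i \<le> j then 1 else 0)" using cnt_stepi[OF perm i(1)] .
  have st2: "cnt \<pi> (i-1) j = cnt \<pi> (i-1) (j-1) + vv \<pi> (i-1) j" using vv_cnt[OF perm j(1)] .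
  have st3: "cnt \<pi> i (j-1) = cnt \<pi> (i-1) (j-1) + (if \<pi> i \<le> j-1 then 1 else 0)" using cnt_stepi[OF perm i(1)] .
  have le1: "cnt \<pi> (i-1) j \<le> i-1" using cnt_le[OF perm] .
  have vle: "vv \<pi> (i-1) j \<le> 1" using vv_le1[OF perm] .
  have ve: "\<pi> i = j \<Longrightarrow> vv \<pi> (i-1) j = 0" using vv_e[OF perm i(1)] by simp
  have Ale: "0 \<le> A" "A \<le> real n" unfolding A_def using cnt_le[OF perm, of "i-1" "j-1"] i by auto
  have rr: "real (card {k\<in>{1..n}. i<k \<and> j<\<pi> k}) = real n - real i - real j + real (cnt \<pi> i j)"
    using rr_card[OF perm i(2) j(2)] .
  have ss: "real (card {k\<in>{1..n}. i<k \<and> \<pi> k < j}) = real j - 1 - real (cnt \<pi> i (j-1))"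
    using ss_card[OF perm i(2) j] .
  have cb: "card {p\<in>{1..n}. p<i \<and> max (\<pi> p) (\<pi> i) = j} =
     (if \<pi> i = j then cnt \<pi> (i-1) (j-1) else 0) + (if \<pi> i < j then vv \<pi> (i-1) j else 0)"
    using cLB[OF perm i j] .
  have ca: "card {p\<in>{1..n}. p<i \<and> min (\<pi> p) (\<pi> i) = j} =
     (if \<pi> i = j then (i-1) - cnt \<pi> (i-1) j else 0) + (if j < \<pi> i then vv \<pi> (i-1) j else 0)"
    using cLA[OF perm i j] .
  have ai: "real (i - 1) = real i - 1" "real (j - 1) = real j - 1" using i j by auto
  consider (lt) "\<pi> i < j" | (eq) "\<pi> i = j" | (gt) "j < \<pi> i" by linarith
  then have key: "Phiact \<pi> n i j = Phi (real n) (real i) (real j) A u v e \<and>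
      dGH (real n) (real i) (real j) A u v e = (Gf i j - Gf (i-1) j) + (Hf i j - Hf i (j-1)) \<and>
      ((u = 0 \<and> v = 0 \<and> e = 0) \<or> (u = 1 \<and> v = 0 \<and> e = 0) \<or> (u=0 \<and> v = 1 \<and> e = 0) \<or> (u = 1 \<and> v = 1 \<and> e = 0) \<or> (u = 0 \<and> v = 0 \<and> e = 1))"
  proof cases
    case lt
    then have "\<pi> i \<le> j" "\<pi> i \<le> j - 1" "\<pi> i \<noteq> j" "\<not> j < \<pi> i" by auto
    moreover have "vv \<pi> (i-1) j = 0 \<or> vv \<pi> (i-1) j = 1" using vle by auto
    ultimately show ?thesis
      unfolding Phiact_def[OF perm] Phi_def dGH_def Gf_def Hf_def aa_def cb ca rr ss choose2_real u_def v_def e_def A_def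
      using lt st1 st2 st3 ai by (auto simp: algebra_simps)
  next
    case eq
    then have "\<pi> i \<le> j" "\<not> \<pi> i \<le> j - 1" "\<not> \<pi> i < j" "\<not> j < \<pi> i" using j by auto
    moreover have "vv \<pi> (i-1) j = 0" using ve eq by auto
    ultimately show ?thesis
      unfolding Phiact_def[OF perm] Phi_def dGH_def Gf_def Hf_def aa_def cb ca rr ss choose2_real u_def v_def e_def A_def
      using eq st1 st2 st3 ai le1 by (auto simp: algebra_simps of_nat_diff)
  next
    case gt
    then have "\<not> \<pi> i \<le> j" "\<not> \<pi> i \<le> j - 1" "\<pi> i \<noteq> j" "\<not> \<pi> i < j" by auto
    moreover have "vv \<pi> (i-1) j = 0 \<or> vv \<pi> (i-1) j = 1" using vle by auto
    ultimately show ?thesis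
      unfolding Phiact_def[OF perm] Phi_def dGH_def Gf_def Hf_def aa_def cb ca rr ss choose2_real u_def v_def e_def A_def
      using gt st1 st2 st3 ai by (auto simp: algebra_simps)
  qed
  have n1: "1 \<le> real n" using i by simp
  have c: "Phi (real n) (real i) (real j) A u v e \<ge> Pos (real n) (real i) (real j) A u v e + dGH (real n) (real i) (real j) A u v e - (10*real n + 30*(real n)^2*e)"
    by (rule core) (use n1 i j Ale key in auto)
  have e0: "0 \<le> e" unfolding e_def by simp
  have "0 \<le> Pos (real n) (real i) (real j) A u v e"
    unfolding Pos_def using e0 n1 by (intro add_nonneg_nonneg divide_nonneg_nonneg mult_nonneg_nonneg) auto
  then show ?thesis using c key unfolding e_def by linarith
qed

lemma total:
  assumes n1: "1 \<le> n"
  shows "(\<Sum>i\<in>{1..n}. \<Sum>j\<in>{1..n}. Phiact \<pi> n i j) \<ge> real n^2*(real n^2-1)/72 - 40*real n^3"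
proof -
  have mono: "(\<Sum>i\<in>{1..n}. \<Sum>j\<in>{1..n}. Phiact \<pi> n i j) \<ge>
     (\<Sum>i\<in>{1..n}. \<Sum>j\<in>{1..n}. (Gf i j - Gf (i-1) j) + (Hf i j - Hf i (j-1)) - (10*real n + 30*(real n)^2 * of_bool (\<pi> i = j)))"
    by (intro sum_mono cell) auto
  have "(\<Sum>i\<in>{1..n}. \<Sum>j\<in>{1..n}. (Gf i j - Gf (i-1) j) + (Hf i j - Hf i (j-1)) - (10*real n + 30*(real n)^2 * of_bool (\<pi> i = j))) = (\<Sum>j\<in>{1..n}. \<Sum>i\<in>{1..n}. Gf i j - Gf (i-1) j) + (\<Sum>i\<in>{1..n}. \<Sum>j\<in>{1..n}. Hf i j - Hf i (j-1))
      - (\<Sum>i\<in>{1..n}. \<Sum>j\<in>{1..n}. 10*real n + 30*(real n)^2 * of_bool (\<pi> i = j))"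
  proof -
    define X where "X i j = Gf i j - Gf (i-1) j" for i j
    define Y where "Y i j = Hf i j - Hf i (j-1)" for i j
    define Z where "Z i j = 10*real n + 30*(real n)^2 * (of_bool (\<pi> i = j)::real)" for i j
    have "(\<Sum>i\<in>{1..n}. \<Sum>j\<in>{1..n}. X i j + Y i j - Z i j) =
       (\<Sum>i\<in>{1..n}. \<Sum>j\<in>{1..n}. X i j) + (\<Sum>i\<in>{1..n}. \<Sum>j\<in>{1..n}. Y i j) - (\<Sum>i\<in>{1..n}. \<Sum>j\<in>{1..n}. Z i j)"
      by (simp only: sum.distrib sum_subtractf)
    moreover have "(\<Sum>i\<in>{1..n}. \<Sum>j\<in>{1..n}. X i j) = (\<Sum>j\<in>{1..n}. \<Sum>i\<in>{1..n}. X i j)"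
      by (rule sum.swap)
    ultimately show ?thesis unfolding X_def Y_def Z_def by simp
  qed
  also have "(\<Sum>j\<in>{1..n}. \<Sum>i\<in>{1..n}. Gf i j - Gf (i-1) j) = 0"
  proof -
    have "(\<Sum>j\<in>{1..n}. \<Sum>i\<in>{1..n}. Gf i j - Gf (i-1) j) = (\<Sum>j\<in>{1..n}. Gf n j - Gf 0 j)"
      by (intro sum.cong refl tele)
    also have "\<dots> = 0"
    proof (intro sum.neutral ballI)
      fix j assume j: "j \<in> {1..n}"
      have "aa n j = real j" "aa n (j-1) = real j - 1" unfolding aa_def using cnt_nj[OF perm, of j] cnt_nj[OF perm, of "j-1"] j by auto
      moreover have "aa 0 j = 0" "aa 0 (j-1) = 0" unfolding aa_def by (simp_all add: cnt_0i[OF perm])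
      ultimately show "Gf n j - Gf 0 j = 0" unfolding Gf_def using G1_bd[of "real n" "real j"] n1 by simp
    qed
    finally show ?thesis .
  qed
  also have "(\<Sum>i\<in>{1..n}. \<Sum>j\<in>{1..n}. Hf i j - Hf i (j-1)) = (\<Sum>i\<in>{1..n}. real i^2 * (real n - real i) / 6)"
  proof -
    have "(\<Sum>i\<in>{1..n}. \<Sum>j\<in>{1..n}. Hf i j - Hf i (j-1)) = (\<Sum>i\<in>{1..n}. Hf i n - Hf i 0)"
      by (intro sum.cong refl tele)
    also have "\<dots> = (\<Sum>i\<in>{1..n}. real i^2 * (real n - real i) / 6)"
    proof (intro sum.cong refl)
      fix i assume i: "i \<in> {1..n}"
      have "aa i n = real i" "aa i 0 = 0" unfolding aa_def using cnt_in[OF perm, of i] cnt_0j[OF perm, of i] i by auto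
      then show "Hf i n - Hf i 0 = real i^2 * (real n - real i) / 6"
        unfolding Hf_def using H0_top[of "real n" "real i"] H0_bot n1 by simp
    qed
    finally show ?thesis .
  qed
  also have "(\<Sum>i\<in>{1..n}. \<Sum>j\<in>{1..n}. 10*real n + 30*(real n)^2 * of_bool (\<pi> i = j)) = 40 * real n^3"
  proof -
    have "(\<Sum>i\<in>{1..n}. \<Sum>j\<in>{1..n}. 10*real n + 30*(real n)^2 * of_bool (\<pi> i = j)) = (\<Sum>i\<in>{1..n}. 40 * real n^2)"
    proof (intro sum.cong refl)
      fix i assume i: "i \<in> {1..n}"
      have "\<pi> i \<in> {1..n}" using pin[OF perm i] .
      then have "(\<Sum>j\<in>{1..n}. (of_bool (\<pi> i = j)::real)) = 1"
        by (simp add: sum.delta of_bool_def)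
      then show "(\<Sum>j\<in>{1..n}. 10*real n + 30*(real n)^2 * of_bool (\<pi> i = j)) = 40 * real n^2"
        by (simp add: sum.distrib sum_distrib_left[symmetric] power2_eq_square del: sum_of_bool_eq)
    qed
    then show ?thesis by (simp add: power2_eq_square power3_eq_cube)
  qed
  also have "(\<Sum>i\<in>{1..n}. real i^2 * (real n - real i) / 6) = real n^2*(real n^2-1)/72"
    using sum_cubic[where m=n and x="real n"] by (simp add: sum_divide_distrib[symmetric] field_simps power2_eq_square)
  finally show ?thesis using mono by simp
qed

end

theorem theorem5p1:
  fixes \<epsilon> :: real
  assumes "\<epsilon> > 0"
  shows "\<exists>n0. \<forall>n \<ge> n0. \<forall>\<pi>. \<pi> permutes {1..n} \<longrightarrow>
           (\<Sum>\<tau>\<leftarrow>patterns8. induced_density \<tau> n \<pi>) \<ge> 1/3 - \<epsilon>"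
proof -
  define n0 where "n0 = max 6 (nat \<lceil>7680/\<epsilon>\<rceil>)"
  show ?thesis
  proof (intro exI allI impI)
    fix n \<pi> assume n: "n0 \<le> n" and perm: "\<pi> permutes {1..n}"
    have n6: "6 \<le> n" using n n0_def by auto
    have "7680/\<epsilon> \<le> real (nat \<lceil>7680/\<epsilon>\<rceil>)" by linarith
    also have "\<dots> \<le> real n" using n n0_def by auto
    finally have ne: "7680 \<le> \<epsilon> * real n" using assms by (simp add: pos_divide_le_eq mult.commute)
    define x where "x = real n"
    have x6: "6 \<le> x" using n6 x_def by simp
    have dens: "(\<Sum>\<tau>\<leftarrow>patterns8. induced_density \<tau> n \<pi>) = (\<Sum>i\<in>{1..n}. \<Sum>j\<in>{1..n}. Phiact \<pi> n i j) / real (n choose 4)"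
      using dens_list[OF len8, of n \<pi>] S_eq[OF perm] by simp
    have T: "(\<Sum>i\<in>{1..n}. \<Sum>j\<in>{1..n}. Phiact \<pi> n i j) \<ge> x^2*(x^2-1)/72 - 40*x^3"
      using total[OF perm] n6 unfolding x_def by auto
    define C where "C = real (n choose 4)"
    have C: "C = x*(x-1)*(x-2)*(x-3)/24" unfolding C_def x_def by (rule choose4r)
    have Cpos: "C > 0" unfolding C using x6 by (intro divide_pos_pos mult_pos_pos) auto
    have h1: "C/3 \<le> x^2*(x^2-1)/72"
    proof -
      have a: "(x-2)*(x-3) \<le> x*(x+1)" using x6 by (simp add: algebra_simps)
      have b: "0 \<le> x*(x-1)" using x6 by simp
      have "(x*(x-1))*((x-2)*(x-3)) \<le> (x*(x-1))*(x*(x+1))" using mult_left_mono[OF a b] .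
      moreover have e1: "C/3 = (x*(x-1))*((x-2)*(x-3))/72" unfolding C by (simp add: field_simps)
      moreover have e2: "x^2*(x^2-1)/72 = (x*(x-1))*(x*(x+1))/72" by (simp add: field_simps power2_eq_square)
      ultimately show ?thesis by (simp only: e1 e2)
    qed
    have h2: "40*x^3 \<le> \<epsilon> * C"
    proof -
      have f: "x/2 \<le> x-1" "x/2 \<le> x-2" "x/2 \<le> x-3" "0 \<le> x/2" using x6 by auto
      have "(x/2)*(x/2) \<le> (x-1)*(x-2)" by (rule mult_mono) (use f in auto)
      then have "(x/2)*(x/2)*(x/2) \<le> (x-1)*(x-2)*(x-3)" by (rule mult_mono) (use f x6 in auto)
      then have "x*((x/2)*(x/2)*(x/2)) \<le> x*((x-1)*(x-2)*(x-3))" using x6 by (intro mult_left_mono) auto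
      then have "x^4/192 \<le> C" unfolding C by (simp add: power_def numeral_eq_Suc algebra_simps)
      then have "\<epsilon>*(x^4/192) \<le> \<epsilon>*C" using assms by (intro mult_left_mono) auto
      moreover have "40*x^3 \<le> \<epsilon>*(x^4/192)"
      proof -
        have "7680*x^3 \<le> (\<epsilon>*x)*x^3" using ne x6 unfolding x_def[symmetric] by (intro mult_right_mono) auto
        then show ?thesis by (simp add: power_def numeral_eq_Suc algebra_simps)
      qed
      ultimately show ?thesis by linarith
    qed
    have "(1/3 - \<epsilon>) * C \<le> (\<Sum>i\<in>{1..n}. \<Sum>j\<in>{1..n}. Phiact \<pi> n i j)"
      using T h1 h2 by (simp add: algebra_simps)
    then have "1/3 - \<epsilon> \<le> (\<Sum>i\<in>{1..n}. \<Sum>j\<in>{1..n}. Phiact \<pi> n i j) / C"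
      using Cpos by (simp add: pos_le_divide_eq)
    then show "(\<Sum>\<tau>\<leftarrow>patterns8. induced_density \<tau> n \<pi>) \<ge> 1/3 - \<epsilon>"
      unfolding dens C_def .
  qed
qed

end
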